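(* Let $\alpha>0$, $\beta>0$ and $\|a\|\ge\alpha$ be real numbers, $\kappa=\|a\|/\beta$, and let $\gamma_{\mathrm{opt}}(\alpha,\beta,\|a\|)$ be the smallest positive root of $\mu^3-(\|a\|^2+\beta^2)\mu+\alpha\beta^2=0$. Let \[ D_1=\begin{bmatrix}\frac1\alpha&\frac1\beta\left(1+\frac{\|a\|}{\alpha}\right)\\ \frac1\beta\left(1+\frac{\|a\|}{\alpha}\right)&\frac{\|a\|}{\beta^2}\left(1+\frac{\|a\|}{\alpha}\right)\end{bmatrix}. \] Then \[ \gamma_{\mathrm{opt}}(\alpha,\beta,\|a\|)>\frac{\alpha}{1+\kappa^2}>\frac{1}{\rho(D_1)}, \] where $\rho(D_1)$ denotes the spectral radius of $D_1$. *)

theory Defs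
  imports Complex_Main "Jordan_Normal_Form.Spectral_Radius"
begin

text \<open>gamma_opt alpha beta na: the smallest positive root of
  mu^3 - (na^2 + beta^2) mu + alpha beta^2 = 0 (na stands for the norm of a).\<close>
definition gamma_opt :: "real \<Rightarrow> real \<Rightarrow> real \<Rightarrow> real" where
  "gamma_opt \<alpha> \<beta> na =
     Inf {\<mu>::real. \<mu> > 0 \<and> \<mu>^3 - (na^2 + \<beta>^2) * \<mu> + \<alpha> * \<beta>^2 = 0}"

text \<open>The 2x2 matrix D_1, viewed as a complex matrix so that the library's spectral radius applies.\<close>
definition D1 :: "real \<Rightarrow> real \<Rightarrow> real \<Rightarrow> complex mat" where
  "D1 \<alpha> \<beta> na = map_mat complex_of_real (mat_of_rows_list 2
     [[1 / \<alpha>, (1 / \<beta>) * (1 + na / \<alpha>)],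
      [(1 / \<beta>) * (1 + na / \<alpha>), (na / \<beta>^2) * (1 + na / \<alpha>)]])"

end

theory Submission
  imports Defs
begin

lemma ev2:
  fixes a b d :: real
  assumes b: "b \<noteq> 0" and l: "l^2 - (a+d)*l + (a*d - b^2) = 0"
  shows "eigenvalue (map_mat complex_of_real (mat_of_rows_list 2 [[a,b],[b,d]])) (complex_of_real l)"
proof -
  let ?A = "map_mat complex_of_real (mat_of_rows_list 2 [[a,b],[b,d]])"
  let ?v = "vec_of_list [complex_of_real b, complex_of_real (l - a)]"
  have e: "b*b + d*(l-a) = l*(l-a)" using l by (simp add: power2_eq_square algebra_simps)
  have "?A *\<^sub>v ?v = complex_of_real l \<cdot>\<^sub>v ?v"
  proof (rule eq_vecI)
    fix i assume "i < dim_vec (complex_of_real l \<cdot>\<^sub>v ?v)"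
    hence "i = 0 \<or> i = 1" by auto
    moreover have "complex_of_real (b*b + d*(l-a)) = complex_of_real (l*(l-a))" using e by simp
    ultimately show "(?A *\<^sub>v ?v) $ i = (complex_of_real l \<cdot>\<^sub>v ?v) $ i"
      by (auto simp: mat_of_rows_list_def scalar_prod_def algebra_simps)
  qed (auto simp: mat_of_rows_list_def)
  moreover have "?v \<noteq> 0\<^sub>v 2" using b
    by (metis One_nat_def length_Cons list.size(3) numeral_2_eq_2 of_real_eq_0_iff vec_of_list_index zero_less_Suc index_zero_vec(1) nth_Cons_0)
  ultimately show ?thesis unfolding eigenvalue_def eigenvector_def
    by (intro exI[of _ ?v]) (auto simp: mat_of_rows_list_def)
qed

lemma part1:
  fixes \<alpha> \<beta> na :: real
  assumes a: "\<alpha> > 0" and b: "\<beta> > 0" and n: "na \<ge> \<alpha>"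
  shows "gamma_opt \<alpha> \<beta> na > \<alpha> * \<beta>^2 / (na^2 + \<beta>^2)"
proof -
  define K where "K = na^2 + \<beta>^2"
  define m where "m = \<alpha> * \<beta>^2 / K"
  define p where "p = (\<lambda>\<mu>::real. \<mu>^3 - K * \<mu> + \<alpha> * \<beta>^2)"
  define S where "S = {\<mu>::real. \<mu> > 0 \<and> \<mu>^3 - (na^2 + \<beta>^2) * \<mu> + \<alpha> * \<beta>^2 = 0}"
  have K: "K > 0" using b unfolding K_def by (simp add: add_nonneg_pos)
  have m: "m > 0" using a b K unfolding m_def by simp
  have Km: "K * m = \<alpha> * \<beta>^2" using K unfolding m_def by simp
  define m' where "m' = m + m^3 / (2*K)"
  have mm': "m < m'" using m K unfolding m'_def by simp
  have low: "\<mu> \<ge> m'" if "\<mu> \<in> S" for \<mu>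
  proof (rule ccontr)
    assume "\<not> \<mu> \<ge> m'"
    hence lt: "\<mu> < m'" by simp
    from that have pos: "\<mu> > 0" and eq: "\<mu>^3 - K * \<mu> + K * m = 0" unfolding S_def K_def[symmetric] Km by auto
    show False
    proof (cases "\<mu> \<le> m")
      case True
      hence "K * \<mu> \<le> K * m" using K by simp
      moreover have "\<mu>^3 > 0" using pos by simp
      ultimately show False using eq by linarith
    next
      case False
      hence "m^3 < \<mu>^3" using m by (simp add: power_strict_mono)
      moreover have "K * \<mu> < K * m + m^3/2" using lt K unfolding m'_def by (simp add: field_simps)
      moreover have "m^3 > 0" using m by simp
      ultimately show False using eq by linarith
    qed
  qed
  have "\<exists>x. 0 \<le> x \<and> x \<le> \<alpha> \<and> p x = 0"
  proof (rule IVT2)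
    show "p \<alpha> \<le> 0" unfolding p_def K_def
    proof -
      have "\<alpha>^3 - (na\<^sup>2 + \<beta>\<^sup>2) * \<alpha> + \<alpha> * \<beta>\<^sup>2 = \<alpha> * (\<alpha>^2 - na^2)" by (simp add: algebra_simps power2_eq_square power3_eq_cube)
      moreover have "\<alpha>^2 \<le> na^2" using a n by (simp add: power_mono)
      ultimately show "\<alpha>^3 - (na\<^sup>2 + \<beta>\<^sup>2) * \<alpha> + \<alpha> * \<beta>\<^sup>2 \<le> 0" using a by (simp add: mult_nonneg_nonpos)
    qed
    show "0 \<le> p 0" unfolding p_def using a b by simp
    show "0 \<le> \<alpha>" using a by simp
    show "\<forall>x. 0 \<le> x \<and> x \<le> \<alpha> \<longrightarrow> isCont p x" unfolding p_def by (auto intro!: continuous_intros)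
  qed
  then obtain x where x: "0 \<le> x" "p x = 0" by blast
  have "x \<noteq> 0" using x a b unfolding p_def by auto
  hence "x \<in> S" using x unfolding S_def p_def K_def by auto
  hence ne: "S \<noteq> {}" by auto
  have "m' \<le> Inf S" by (rule cInf_greatest[OF ne]) (use low in auto)
  hence "m < Inf S" using mm' by simp
  thus ?thesis unfolding gamma_opt_def S_def[symmetric] m_def K_def .
qed

theorem mainTheorem3:
  fixes \<alpha> \<beta> na \<kappa> :: real
  assumes "\<alpha> > 0" and "\<beta> > 0" and "na \<ge> \<alpha>"
    and "\<kappa> = na / \<beta>"
  shows "gamma_opt \<alpha> \<beta> na > \<alpha> / (1 + \<kappa>^2)
       \<and> \<alpha> / (1 + \<kappa>^2) > 1 / spectral_radius (D1 \<alpha> \<beta> na)"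
proof
  have tgt: "\<alpha> / (1 + \<kappa>^2) = \<alpha> * \<beta>^2 / (na^2 + \<beta>^2)"
    unfolding assms(4) using assms by (simp add: field_simps power_divide)
  show "gamma_opt \<alpha> \<beta> na > \<alpha> / (1 + \<kappa>^2)" unfolding tgt using part1 assms by blast
  define a where "a = 1/\<alpha>"
  define c where "c = 1 + na/\<alpha>"
  define b where "b = (1/\<beta>) * c"
  define d where "d = (na/\<beta>^2) * c"
  have c: "c > 0" using assms unfolding c_def by (simp add: add_pos_nonneg)
  have D: "D1 \<alpha> \<beta> na = map_mat complex_of_real (mat_of_rows_list 2 [[a,b],[b,d]])"
    unfolding D1_def a_def b_def d_def c_def ..
  have bad: "b^2 - a*d = c / \<beta>^2" using assms unfolding a_def b_def d_def c_def
    by (simp add: field_simps power2_eq_square)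
  have "c / \<beta>^2 > 0" using c assms by simp
  hence bad': "b^2 > a*d" using bad by linarith
  define t where "t = a + d"
  have t: "t > 0" using assms c unfolding t_def a_def d_def by (simp add: add_pos_nonneg)
  define s where "s = sqrt ((a-d)^2 + 4*b^2)"
  have s2: "s^2 = (a-d)^2 + 4*b^2" unfolding s_def by simp
  have s0: "s \<ge> 0" unfolding s_def by simp
  have "s^2 > t^2" using s2 bad' unfolding t_def by (simp add: power2_eq_square algebra_simps)
  hence st: "s > t" using s0 t by (meson abs_le_square_iff abs_of_nonneg less_le not_less power2_less_imp_less)
  define l where "l = (t + s)/2"
  have lt: "l > t" using st unfolding l_def by simp
  have leq: "l^2 - (a+d)*l + (a*d - b^2) = 0" unfolding l_def t_def
    using s2 by (simp add: power2_eq_square field_simps)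
  have b0: "b \<noteq> 0" using bad' assms c unfolding b_def by simp
  have ev: "eigenvalue (D1 \<alpha> \<beta> na) (complex_of_real l)" unfolding D by (rule ev2[OF b0 leq])
  have car: "D1 \<alpha> \<beta> na \<in> carrier_mat 2 2" unfolding D by (rule carrier_matI) (simp_all add: mat_of_rows_list_def)
  have "norm (complex_of_real l) \<le> spectral_radius (D1 \<alpha> \<beta> na)"
    by (rule spectral_radius_mem_max(2)[OF car]) (use ev in \<open>auto simp: spectrum_def intro!: image_eqI[where x="complex_of_real l"]\<close>)
  hence rho: "l \<le> spectral_radius (D1 \<alpha> \<beta> na)" using lt t by simp
  have "(na^2 + \<beta>^2) / (\<alpha> * \<beta>^2) < t" unfolding t_def a_def d_def c_def using assms
    by (simp add: field_simps power2_eq_square)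
  hence "(na^2 + \<beta>^2) / (\<alpha> * \<beta>^2) < spectral_radius (D1 \<alpha> \<beta> na)" using rho lt by linarith
  moreover have "(na^2 + \<beta>^2) / (\<alpha> * \<beta>^2) > 0" using assms by (simp add: add_nonneg_pos)
  ultimately have "1 / spectral_radius (D1 \<alpha> \<beta> na) < 1 / ((na^2 + \<beta>^2) / (\<alpha> * \<beta>^2))"
    by (intro frac_less2) auto
  thus "\<alpha> / (1 + \<kappa>^2) > 1 / spectral_radius (D1 \<alpha> \<beta> na)" unfolding tgt by simp
qed

end
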